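(* There is an absolute constant $C>0$ such that the following holds. Let $A$ be an $n\times n$ random matrix with i.i.d. entries $A_{ij}$ satisfying $\mathbb{E}A_{ij}=0$, $\mathbb{E}A_{ij}^2\le1$ and $|A_{ij}|\le \sqrt n/2$ almost surely. Let $\varepsilon\in(0,1/2]$. Then with probability at least $1-\exp(-\varepsilon n)$ there exists $J\subset[n]$ with $|J|\le\varepsilon n$ such that $$\|A_{J^c}\|_{2\to\infty}\le C\sqrt{\ln(\varepsilon^{-1})}\,\sqrt n.$$
   Context: For an $n\times n$ matrix $B$ and a set $S\subset[n]$ of column indices, $B_S$ denotes the matrix obtained from $B$ by replacing by zero all entries in the columns with indices not in $S$ (so $B_{J^c}$ is $B$ with the columns indexed by $J$ zeroed out). $\|B\|_{2\to\infty}=\max_{x\neq0}\|Bx\|_\infty/\|x\|_2$, which equals the maximum Euclidean norm of a row of $B$. *)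

theory Defs
  imports "HOL-Probability.Probability"
begin

text \<open>An n x n real matrix is represented as a function on index pairs (i,j), i,j < n
  (indices [n] = {0..<n}).  B_S zeroes out all columns with index not in S.\<close>
definition col_restrict :: "nat set \<Rightarrow> (nat \<times> nat \<Rightarrow> real) \<Rightarrow> (nat \<times> nat \<Rightarrow> real)" where
  "col_restrict S B = (\<lambda>(i,j). if j \<in> S then B (i,j) else 0)"

text \<open>The 2-to-infinity norm of an n x n matrix: the maximum Euclidean norm of a row
  (inserting 0 only matters for n = 0, since row norms are nonnegative).\<close>
definition norm_2inf :: "nat \<Rightarrow> (nat \<times> nat \<Rightarrow> real) \<Rightarrow> real" where
  "norm_2inf n B = Max (insert 0 ((\<lambda>i. sqrt (\<Sum>j<n. (B (i,j))\<^sup>2)) ` {..<n}))"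

end

theory Submission
  imports Defs
begin


lemma sum_Pow_pow:
  fixes z :: real
  assumes "finite A"
  shows "(\<Sum>S\<in>Pow A. z ^ card S) = (1 + z) ^ card A"
  using assms
proof (induction A rule: finite_induct)
  case empty
  then show ?case by simp
next
  case (insert a A)
  have disj: "Pow A \<inter> insert a ` Pow A = {}" using insert by auto
  have inj: "inj_on (insert a) (Pow A)"
    using insert by (auto simp: inj_on_def)
  have "(\<Sum>S\<in>Pow (insert a A). z ^ card S) = (\<Sum>S\<in>Pow A. z ^ card S) + (\<Sum>S\<in>insert a ` Pow A. z ^ card S)"
    unfolding Pow_insert using disj insert by (intro sum.union_disjoint) auto
  also have "(\<Sum>S\<in>insert a ` Pow A. z ^ card S) = (\<Sum>S\<in>Pow A. z ^ card (insert a S))"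
    using inj by (simp add: sum.reindex)
  also have "\<dots> = (\<Sum>S\<in>Pow A. z * z ^ card S)"
  proof (rule sum.cong)
    fix S assume "S \<in> Pow A"
    then have "finite S" "a \<notin> S" using insert finite_subset by auto
    then show "z ^ card (insert a S) = z * z ^ card S" by simp
  qed simp
  finally show ?case using insert by (simp add: sum_distrib_left[symmetric] algebra_simps)
qed

lemma level_bound:
  fixes x :: real and n M :: nat
  assumes x: "0 \<le> x" and M: "1 \<le> M" and r: "exp 1 * (real n * x) \<le> exp (-1) * real M"
  shows "(\<Sum>S\<in>Pow {..<n}. if S = {} \<or> M \<le> card S then x ^ card S else 0) \<le> 1 + exp (- real M)"
proof (cases "n = 0 \<or> x = 0")
  case True
  have "(\<Sum>S\<in>Pow {..<n}. if S = {} \<or> M \<le> card S then x ^ card S else 0)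
        = (\<Sum>S\<in>Pow {..<n}. if S = {} then 1 else 0)"
  proof (rule sum.cong)
    fix S assume S: "S \<in> Pow {..<n}"
    show "(if S = {} \<or> M \<le> card S then x ^ card S else 0) = (if S = {} then 1 else 0)"
    proof (cases "S = {}")
      case False
      then have "n \<noteq> 0" using S by auto
      with True have "x = 0" by simp
      moreover have "card S \<noteq> 0" using False S finite_subset[of S "{..<n}"] by auto
      ultimately show ?thesis by simp
    qed simp
  qed simp
  also have "\<dots> = 1" by (simp add: sum.delta')
  finally show ?thesis by (smt (verit) exp_gt_zero)
next
  case False
  then have n: "n > 0" and xp: "x > 0" using x by auto
  define y where "y = real n * x"
  have yp: "y > 0" using n xp by (simp add: y_def)
  define t where "t = real M / y"
  have "y \<le> real M"
  proof -
    have "y \<le> exp 1 * y" using yp by simp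
    also have "\<dots> \<le> exp (-1) * real M" using r by (simp add: y_def)
    also have "\<dots> \<le> real M" by (rule mult_left_le_one_le) auto
    finally show ?thesis .
  qed
  then have t1: "1 \<le> t" using yp by (simp add: t_def)
  have tp: "t > 0" using t1 by simp
  have pt: "(if S = {} \<or> M \<le> card S then x ^ card S else 0)
            \<le> (if S = {} then 1 else 0) + (t * x) ^ card S / t ^ M" for S :: "nat set"
  proof (cases "S = {}")
    case True
    then show ?thesis using tp by simp
  next
    case False
    show ?thesis
    proof (cases "M \<le> card S")
      case True
      have "t ^ M \<le> t ^ card S" using True t1 by (simp add: power_increasing)
      then have "x ^ card S * t ^ M \<le> x ^ card S * t ^ card S"
        using xp by (intro mult_left_mono) auto
      then have "x ^ card S \<le> (t * x) ^ card S / t ^ M"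
        using tp by (simp add: field_simps power_mult_distrib)
      then show ?thesis using False True by simp
    next
      case False
      then show ?thesis using \<open>S \<noteq> {}\<close> tp xp by simp
    qed
  qed
  have s1: "(\<Sum>S\<in>Pow {..<n}. if S = {} \<or> M \<le> card S then x ^ card S else 0)
       \<le> (\<Sum>S\<in>Pow {..<n}. (if S = {} then 1 else 0) + (t * x) ^ card S / t ^ M)"
    by (intro sum_mono pt)
  have s2: "(\<Sum>S\<in>Pow {..<n}. (if S = {} then 1 else 0) + (t * x) ^ card S / t ^ M)
        = 1 + (\<Sum>S\<in>Pow {..<n}. (t * x) ^ card S) / t ^ M"
    by (simp add: sum.distrib sum_divide_distrib)
  have s3: "(\<Sum>S\<in>Pow {..<n}. (t * x) ^ card S) = (1 + t * x) ^ n"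
    using sum_Pow_pow[of "{..<n}" "t * x"] by simp
  have s4: "(1 + t * x) ^ n \<le> exp (t * x) ^ n"
    using tp xp by (intro power_mono) (auto simp: add.commute)
  have s5: "exp (t * x) ^ n = exp (real M)"
  proof -
    have "real n * (t * x) = real M" using n xp by (simp add: t_def y_def)
    then show ?thesis by (metis exp_of_nat_mult)
  qed
  have s6: "exp (real M) / t ^ M = (exp 1 / t) ^ M"
    by (metis exp_of_nat_mult mult.right_neutral power_divide)
  have "exp 1 / t \<le> exp (-1)"
  proof -
    have "exp 1 / t = exp 1 * y / real M" using M by (simp add: t_def)
    also have "\<dots> \<le> exp (-1)" using r M by (simp add: y_def divide_le_eq)
    finally show ?thesis .
  qed
  then have "(exp 1 / t) ^ M \<le> exp (-1) ^ M" using tp by (intro power_mono) auto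
  also have "exp (-1) ^ M = exp (- real M)" by (metis exp_of_nat_mult mult.right_neutral mult_minus_right)
  finally have s7: "(exp 1 / t) ^ M \<le> exp (- real M)" .
  have "(1 + t * x) ^ n / t ^ M \<le> exp (real M) / t ^ M"
    using s4 s5 tp by (simp add: divide_right_mono)
  moreover have "(\<Sum>S\<in>Pow {..<n}. if S = {} \<or> M \<le> card S then x ^ card S else 0)
     \<le> 1 + (1 + t * x) ^ n / t ^ M" using s1 s2 s3 by simp
  ultimately show ?thesis using s6 s7 by linarith
qed



lemma exp_sum_bound:
  fixes u L :: real and M :: "nat \<Rightarrow> nat" and N :: nat
  assumes u4: "4 \<le> u" and uL: "L + 1 \<le> u / 2" and Mk: "\<And>k. k < N \<Longrightarrow> (u/2) * (3/2)^k \<le> real (M k)"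
  shows "(\<Sum>k<N. exp (- real (M k))) \<le> exp (- L)"
proof -
  have e2: "2 \<le> exp (1::real)" using exp_ge_add_one_self[of 1] by simp
  have h: "exp (- real (M k)) \<le> exp (- u/2) * (1/2)^k" if k: "k < N" for k
  proof -
    have b: "1 + real k * (1/2) \<le> (1 + 1/2::real) ^ k" by (rule Bernoulli_inequality) simp
    have "(u/2) * (1 + real k / 2) \<le> (u/2) * (3/2)^k" using b u4 by (intro mult_left_mono) auto
    also have "\<dots> \<le> real (M k)" using Mk k by simp
    finally have "- real (M k) \<le> - u/2 + real k * (- u/4)" by (simp add: algebra_simps)
    then have "exp (- real (M k)) \<le> exp (- u/2 + real k * (- u/4))" by simp
    also have "\<dots> = exp (- u/2) * exp (- u/4) ^ k" by (simp only: exp_add exp_of_nat_mult)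
    also have "exp (- u/4) \<le> 1/2"
    proof -
      have "exp (- u/4) \<le> exp (-1)" using u4 by simp
      also have "exp (-1::real) = 1 / exp 1" by (simp add: exp_minus field_simps)
      also have "\<dots> \<le> 1/2" using e2 by (simp add: field_simps)
      finally show ?thesis .
    qed
    then have "exp (- u/4) ^ k \<le> (1/2) ^ k" by (intro power_mono) auto
    then have "exp (- u/2) * exp (- u/4) ^ k \<le> exp (- u/2) * (1/2) ^ k" by (intro mult_left_mono) auto
    finally show ?thesis .
  qed
  have "(\<Sum>k<N. exp (- real (M k))) \<le> (\<Sum>k<N. exp (- u/2) * (1/2)^k)"
    by (intro sum_mono h) auto
  also have "\<dots> = exp (- u/2) * (\<Sum>k<N. (1/2::real)^k)" by (simp add: sum_distrib_left)
  also have "(\<Sum>k<N. (1/2::real)^k) \<le> 2"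
    by (simp add: sum_gp_strict)
  then have "exp (- u/2) * (\<Sum>k<N. (1/2::real)^k) \<le> exp (- u/2) * 2" by (intro mult_left_mono) auto
  also have "exp (- u/2) * 2 \<le> exp (- L - 1) * exp 1"
    using e2 uL by (intro mult_mono) auto
  also have "\<dots> = exp (- L)" by (simp add: exp_add[symmetric])
  finally show ?thesis .
qed

definition lev :: "real \<Rightarrow> nat \<Rightarrow> real set" where
  "lev c k = {x. c / 2 ^ Suc k < x\<^sup>2 \<and> x\<^sup>2 \<le> c / 2 ^ k}"

definition cnt :: "nat \<Rightarrow> real \<Rightarrow> (nat \<times> nat \<Rightarrow> real) \<Rightarrow> nat \<Rightarrow> nat \<Rightarrow> nat" where
  "cnt n c A i k = card {j\<in>{..<n}. A (i,j) \<in> lev c k}"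

definition Gs :: "nat \<Rightarrow> real \<Rightarrow> (nat \<Rightarrow> nat) \<Rightarrow> (nat \<times> nat \<Rightarrow> real) \<Rightarrow> nat \<times> nat \<Rightarrow> nat set" where
  "Gs n c M A = (\<lambda>(i,k). if M k \<le> cnt n c A i k then {j\<in>{..<n}. A (i,j) \<in> lev c k} else {})"

lemma lev_disj:
  assumes c: "c > 0" and "x \<in> lev c k" "x \<in> lev c l" shows "k = l"
proof (rule ccontr)
  assume "k \<noteq> l"
  then consider "k < l" | "l < k" by linarith
  then show False
  proof cases
    case 1
    have "(2::real) ^ Suc k \<le> 2 ^ l" using 1 by (intro power_increasing) auto
    then have "c / 2 ^ l \<le> c / 2 ^ Suc k" using c by (intro divide_left_mono) auto
    then show False using assms unfolding lev_def by auto
  next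
    case 2
    have "(2::real) ^ Suc l \<le> 2 ^ k" using 2 by (intro power_increasing) auto
    then have "c / 2 ^ k \<le> c / 2 ^ Suc l" using c by (intro divide_left_mono) auto
    then show False using assms unfolding lev_def by auto
  qed
qed

lemma lev_exists_aux:
  "c / 2 ^ m < x\<^sup>2 \<Longrightarrow> x\<^sup>2 \<le> c \<Longrightarrow> \<exists>k<m. x \<in> lev c k"
proof (induction m)
  case 0
  then show ?case by simp
next
  case (Suc m)
  show ?case
  proof (cases "c / 2 ^ m < x\<^sup>2")
    case True
    then show ?thesis using Suc by (meson less_SucI)
  next
    case False
    then have "x \<in> lev c m" using Suc.prems unfolding lev_def by auto
    then show ?thesis by auto
  qed
qed

lemma lev_exists:
  "c / 2 ^ N \<le> 1 \<Longrightarrow> 1 < x\<^sup>2 \<Longrightarrow> x\<^sup>2 \<le> c \<Longrightarrow> \<exists>k<N. x \<in> lev c k"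
proof -
  assume a: "c / 2 ^ N \<le> 1" "1 < x\<^sup>2" "x\<^sup>2 \<le> c"
  then have "c / 2 ^ N < x\<^sup>2" by linarith
  then show ?thesis using lev_exists_aux[of c N x] a by blast
qed

lemma row_bound:
  assumes bnd: "\<forall>i<n. \<forall>j<n. (A (i,j))\<^sup>2 \<le> c" and cN: "c / 2 ^ N \<le> 1"
    and J: "J = (\<Union>p\<in>{..<n}\<times>{..<N}. Gs n c M A p)" and i: "i < n"
    and M1: "\<And>k. 1 \<le> M k"
  shows "(\<Sum>j<n. (col_restrict ({..<n} - J) A (i,j))\<^sup>2) \<le> real n + (\<Sum>k<N. (real (M k) - 1) * (c / 2^k))"
proof -
  have c0: "0 \<le> c" using bnd i by (meson order_trans zero_le_power2)
  define f where "f j k = (if A (i,j) \<in> lev c k \<and> cnt n c A i k < M k then c / 2^k else 0)" for j k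
  have pt: "(col_restrict ({..<n} - J) A (i,j))\<^sup>2 \<le> 1 + (\<Sum>k<N. f j k)" if j: "j < n" for j
  proof (cases "j \<in> J")
    case True
    then show ?thesis using c0 by (simp add: col_restrict_def f_def sum_nonneg)
  next
    case False
    show ?thesis
    proof (cases "(A (i,j))\<^sup>2 \<le> 1")
      case True
      then show ?thesis using False j c0 by (simp add: col_restrict_def f_def sum_nonneg add_increasing2)
    next
      case gt: False
      then obtain k where k: "k < N" "A (i,j) \<in> lev c k"
        using lev_exists[OF cN, of "A (i,j)"] bnd i j by auto
      have "cnt n c A i k < M k"
      proof (rule ccontr)
        assume "\<not> cnt n c A i k < M k"
        then have "j \<in> Gs n c M A (i,k)" using k j by (simp add: Gs_def)
        then have "j \<in> J" using J i k by blast
        then show False using False by simp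
      qed
      then have fk: "f j k = c / 2^k" using k by (simp add: f_def)
      have "(A (i,j))\<^sup>2 \<le> c / 2^k" using k unfolding lev_def by auto
      also have "\<dots> \<le> (\<Sum>k<N. f j k)" unfolding fk[symmetric]
        by (rule member_le_sum) (use k c0 in \<open>auto simp: f_def\<close>)
      finally show ?thesis using False j by (simp add: col_restrict_def)
    qed
  qed
  have "(\<Sum>j<n. (col_restrict ({..<n} - J) A (i,j))\<^sup>2) \<le> (\<Sum>j<n. 1 + (\<Sum>k<N. f j k))"
    by (intro sum_mono pt) auto
  also have "\<dots> = real n + (\<Sum>k<N. \<Sum>j<n. f j k)" by (simp add: sum.distrib sum.swap[of f])
  also have "(\<Sum>k<N. \<Sum>j<n. f j k) \<le> (\<Sum>k<N. (real (M k) - 1) * (c / 2^k))"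
  proof (rule sum_mono)
    fix k assume k: "k \<in> {..<N}"
    show "(\<Sum>j<n. f j k) \<le> (real (M k) - 1) * (c / 2^k)"
    proof (cases "cnt n c A i k < M k")
      case True
      have "(\<Sum>j<n. f j k) = (\<Sum>j<n. if A (i,j) \<in> lev c k then c / 2^k else 0)"
        using True by (simp add: f_def)
      also have "\<dots> = (\<Sum>j\<in>{j\<in>{..<n}. A (i,j) \<in> lev c k}. c / 2^k)"
        by (rule sum.inter_filter[symmetric]) simp
      also have "\<dots> = real (card {j\<in>{..<n}. A (i,j) \<in> lev c k}) * (c / 2^k)"
        by (rule sum_constant)
      also have "\<dots> = real (cnt n c A i k) * (c / 2^k)" by (simp only: cnt_def)
      also have "\<dots> \<le> (real (M k) - 1) * (c / 2^k)"
        using True c0 by (intro mult_right_mono) auto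
      finally show ?thesis .
    next
      case False
      then have "(\<Sum>j<n. f j k) = 0" by (simp add: f_def)
      moreover have "0 \<le> (real (M k) - 1) * (c / 2^k)" using M1[of k] c0 by auto
      ultimately show ?thesis by simp
    qed
  qed
  finally show ?thesis by simp
qed

lemma norm_2inf_le:
  assumes "\<And>i. i < n \<Longrightarrow> (\<Sum>j<n. (B (i,j))\<^sup>2) \<le> R" "0 \<le> R"
  shows "norm_2inf n B \<le> sqrt R"
  unfolding norm_2inf_def using assms by (intro Max.boundedI) auto



lemma lev_borel: "lev c k \<in> sets borel"
  unfolding lev_def by measurable

lemma inter_lev_measure:
  assumes mu: "prob_space \<mu>" and sb: "sets \<mu> = sets borel" and c: "c > 0" and S: "finite S"
  shows "measure \<mu> (\<Inter>k\<in>S. lev c k) \<le> (\<Prod>k\<in>S. measure \<mu> (lev c k))"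
proof -
  interpret prob_space \<mu> by (rule mu)
  have sp: "space \<mu> = UNIV" using sets_eq_imp_space_eq[OF sb] by simp
  consider "S = {}" | k where "S = {k}" | k1 k2 where "k1 \<in> S" "k2 \<in> S" "k1 \<noteq> k2"
    by (metis empty_iff insertI1 is_singletonI' is_singleton_the_elem)
  then show ?thesis
  proof cases
    case 1
    then show ?thesis using prob_space sp by simp
  next
    case 2
    then show ?thesis by simp
  next
    case 3
    have "(\<Inter>k\<in>S. lev c k) = {}"
      using 3 lev_disj[OF c] by blast
    then show ?thesis by (simp add: prod_nonneg)
  qed
qed

definition Xb :: "nat \<Rightarrow> real \<Rightarrow> (nat \<times> nat \<Rightarrow> nat set) \<Rightarrow> nat \<times> nat \<Rightarrow> real set" where
  "Xb N c g = (\<lambda>(i,j). (\<Inter>k\<in>{k. k < N \<and> j \<in> g (i,k)}. lev c k))"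

lemma Xb_sets: assumes "sets \<mu> = sets borel" shows "Xb N c g e \<in> sets \<mu>"
proof -
  obtain i j where e: "e = (i,j)" by fastforce
  let ?S = "{k. k < N \<and> j \<in> g (i,k)}"
  have "(\<Inter>k\<in>?S. lev c k) \<in> sets borel"
  proof (cases "?S = {}")
    case True then show ?thesis by (simp only: True) simp
  next
    case False then show ?thesis by (intro sets.finite_INT) (auto simp: lev_borel)
  qed
  then show ?thesis using assms e by (simp add: Xb_def)
qed

lemma box_measure:
  assumes mu: "prob_space \<mu>" and sb: "sets \<mu> = sets borel" and c: "c > 0"
    and g: "\<And>p. p \<in> {..<n}\<times>{..<N} \<Longrightarrow> g p \<subseteq> {..<n}"
  shows "measure (PiM ({..<n}\<times>{..<n}) (\<lambda>_. \<mu>))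
           {A \<in> space (PiM ({..<n}\<times>{..<n}) (\<lambda>_. \<mu>)). \<forall>e\<in>{..<n}\<times>{..<n}. A e \<in> Xb N c g e}
         \<le> (\<Prod>p\<in>{..<n}\<times>{..<N}. measure \<mu> (lev c (snd p)) ^ card (g p))"
proof -
  let ?I = "{..<n}\<times>{..<n}"
  interpret P: finite_product_prob_space "\<lambda>_. \<mu>" ?I
  proof -
    interpret prob_space \<mu> by (rule mu)
    show "finite_product_prob_space (\<lambda>_. \<mu>) ?I"
      by unfold_locales auto
  qed
  let ?p = "\<lambda>k. measure \<mu> (lev c k)"
  have em: "emeasure (PiM ?I (\<lambda>_. \<mu>)) {A \<in> space (PiM ?I (\<lambda>_. \<mu>)). \<forall>e\<in>?I. A e \<in> Xb N c g e}
      = (\<Prod>e\<in>?I. emeasure \<mu> (Xb N c g e))"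
    by (rule P.emeasure_PiM_Collect) (auto intro: Xb_sets[OF sb])
  also have "\<dots> = ennreal (\<Prod>e\<in>?I. measure \<mu> (Xb N c g e))"
    by (simp add: P.M.emeasure_eq_measure prod_ennreal)
  finally have "measure (PiM ?I (\<lambda>_. \<mu>)) {A \<in> space (PiM ?I (\<lambda>_. \<mu>)). \<forall>e\<in>?I. A e \<in> Xb N c g e}
      = (\<Prod>e\<in>?I. measure \<mu> (Xb N c g e))"
    by (simp add: P.emeasure_eq_measure prod_nonneg)
  also have "\<dots> \<le> (\<Prod>e\<in>?I. \<Prod>k<N. if snd e \<in> g (fst e, k) then ?p k else 1)"
  proof (rule prod_mono)
    fix e assume "e \<in> ?I"
    obtain i j where e: "e = (i,j)" by fastforce
    let ?S = "{k. k < N \<and> j \<in> g (i,k)}"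
    have "measure \<mu> (Xb N c g e) = measure \<mu> (\<Inter>k\<in>?S. lev c k)" by (simp add: Xb_def e)
    also have "\<dots> \<le> (\<Prod>k\<in>?S. ?p k)" by (rule inter_lev_measure[OF mu sb c]) simp
    also have "\<dots> = (\<Prod>k\<in>{k\<in>{..<N}. j \<in> g (i,k)}. ?p k)" by (intro prod.cong) auto
    also have "\<dots> = (\<Prod>k<N. if j \<in> g (i,k) then ?p k else 1)"
      by (rule prod.inter_filter) simp
    finally show "0 \<le> measure \<mu> (Xb N c g e) \<and>
        measure \<mu> (Xb N c g e) \<le> (\<Prod>k<N. if snd e \<in> g (fst e, k) then ?p k else 1)"
      by (simp add: e)
  qed
  also have "\<dots> = (\<Prod>(i,j)\<in>?I. \<Prod>k<N. if j \<in> g (i, k) then ?p k else 1)"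
    by (intro prod.cong) auto
  also have "\<dots> = (\<Prod>i<n. \<Prod>j<n. \<Prod>k<N. if j \<in> g (i, k) then ?p k else 1)"
    by (rule prod.cartesian_product[symmetric])
  also have "\<dots> = (\<Prod>i<n. \<Prod>k<N. \<Prod>j<n. if j \<in> g (i, k) then ?p k else 1)"
    by (intro prod.cong refl prod.swap)
  also have "\<dots> = (\<Prod>i<n. \<Prod>k<N. ?p k ^ card (g (i,k)))"
  proof (intro prod.cong refl)
    fix i k assume i: "i \<in> {..<n}" and k: "k \<in> {..<N}"
    have "(\<Prod>j<n. if j \<in> g (i, k) then ?p k else 1) = (\<Prod>j\<in>{j\<in>{..<n}. j \<in> g (i,k)}. ?p k)"
      by (rule prod.inter_filter[symmetric]) simp
    also have "{j\<in>{..<n}. j \<in> g (i,k)} = g (i,k)" using g[of "(i,k)"] i k by auto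
    finally show "(\<Prod>j<n. if j \<in> g (i, k) then ?p k else 1) = ?p k ^ card (g (i,k))" by simp
  qed
  also have "\<dots> = (\<Prod>(i,k)\<in>{..<n}\<times>{..<N}. ?p k ^ card (g (i,k)))"
    by (rule prod.cartesian_product)
  also have "\<dots> = (\<Prod>p\<in>{..<n}\<times>{..<N}. ?p (snd p) ^ card (g p))"
    by (intro prod.cong) auto
  finally show ?thesis .
qed



lemma witness_sum:
  fixes p :: "nat \<Rightarrow> real" and M :: "nat \<Rightarrow> nat" and n N :: nat and \<epsilon> :: real
  assumes p0: "\<And>k. 0 \<le> p k" and M1: "\<And>k. 1 \<le> M k"
    and r: "\<And>k. k < N \<Longrightarrow> exp 1 * (real n * (exp 2 * p k)) \<le> exp (-1) * real (M k)"
    and se: "(\<Sum>k<N. exp (- real (M k))) \<le> \<epsilon>"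
  shows "(\<Sum>g\<in>{g \<in> PiE ({..<n}\<times>{..<N}) (\<lambda>_. Pow {..<n}).
            (\<forall>x\<in>{..<n}\<times>{..<N}. g x = {} \<or> M (snd x) \<le> card (g x)) \<and>
            \<epsilon> * real n < (\<Sum>x\<in>{..<n}\<times>{..<N}. real (card (g x)))}.
          \<Prod>x\<in>{..<n}\<times>{..<N}. p (snd x) ^ card (g x)) \<le> exp (- \<epsilon> * real n)"
proof -
  let ?K = "{..<n}\<times>{..<N}"
  let ?PE = "PiE ?K (\<lambda>_. Pow {..<n})"
  let ?W = "{g \<in> ?PE. (\<forall>x\<in>?K. g x = {} \<or> M (snd x) \<le> card (g x)) \<and>
            \<epsilon> * real n < (\<Sum>x\<in>?K. real (card (g x)))}"
  define \<psi> where "\<psi> x S = (if S = {} \<or> M (snd x) \<le> card S then (exp 2 * p (snd x)) ^ card S else 0)"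
    for x :: "nat \<times> nat" and S :: "nat set"
  have fin: "finite ?PE" by (intro finite_PiE) auto
  have psi0: "0 \<le> \<psi> x S" for x S using p0 by (simp add: \<psi>_def)
  have step1: "(\<Prod>x\<in>?K. p (snd x) ^ card (g x)) \<le> exp (-2 * \<epsilon> * real n) * (\<Prod>x\<in>?K. \<psi> x (g x))"
    if g: "g \<in> ?W" for g
  proof -
    have "(\<Prod>x\<in>?K. \<psi> x (g x)) = (\<Prod>x\<in>?K. exp (2 * real (card (g x))) * p (snd x) ^ card (g x))"
    proof (intro prod.cong refl)
      fix x assume xK: "x \<in> ?K"
      have "\<forall>x\<in>?K. g x = {} \<or> M (snd x) \<le> card (g x)" using g by (simp only: mem_Collect_eq) (elim conjE)
      then have "g x = {} \<or> M (snd x) \<le> card (g x)" using xK by (rule bspec)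
      then show "\<psi> x (g x) = exp (2 * real (card (g x))) * p (snd x) ^ card (g x)"
        by (simp add: \<psi>_def power_mult_distrib exp_of_nat_mult[symmetric] mult.commute)
    qed
    also have "\<dots> = exp (\<Sum>x\<in>?K. 2 * real (card (g x))) * (\<Prod>x\<in>?K. p (snd x) ^ card (g x))"
      by (simp add: prod.distrib exp_sum)
    finally have eq: "(\<Prod>x\<in>?K. \<psi> x (g x)) = exp (\<Sum>x\<in>?K. 2 * real (card (g x))) * (\<Prod>x\<in>?K. p (snd x) ^ card (g x))" .
    have one: "1 \<le> exp (-2 * \<epsilon> * real n) * exp (\<Sum>x\<in>?K. 2 * real (card (g x)))"
    proof -
      have "2 * (\<epsilon> * real n) \<le> (\<Sum>x\<in>?K. 2 * real (card (g x)))"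
        using g by (simp add: sum_distrib_left[symmetric])
      then show ?thesis by (simp add: exp_add[symmetric])
    qed
    then have "(\<Prod>x\<in>?K. p (snd x) ^ card (g x)) \<le>
        (exp (-2 * \<epsilon> * real n) * exp (\<Sum>x\<in>?K. 2 * real (card (g x)))) * (\<Prod>x\<in>?K. p (snd x) ^ card (g x))"
      using mult_right_mono[OF one, of "\<Prod>x\<in>?K. p (snd x) ^ card (g x)"] p0
      by (simp add: prod_nonneg)
    also have "\<dots> = exp (-2 * \<epsilon> * real n) * (\<Prod>x\<in>?K. \<psi> x (g x))" by (simp add: eq)
    finally show ?thesis .
  qed
  have "(\<Sum>g\<in>?W. \<Prod>x\<in>?K. p (snd x) ^ card (g x)) \<le> (\<Sum>g\<in>?W. exp (-2 * \<epsilon> * real n) * (\<Prod>x\<in>?K. \<psi> x (g x)))"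
    by (intro sum_mono step1)
  also have "\<dots> \<le> (\<Sum>g\<in>?PE. exp (-2 * \<epsilon> * real n) * (\<Prod>x\<in>?K. \<psi> x (g x)))"
    by (intro sum_mono2 fin) (auto intro!: mult_nonneg_nonneg prod_nonneg psi0)
  also have "\<dots> = exp (-2 * \<epsilon> * real n) * (\<Prod>x\<in>?K. \<Sum>S\<in>Pow {..<n}. \<psi> x S)"
    by (simp add: sum_distrib_left[symmetric] prod_sum_PiE)
  also have "(\<Prod>x\<in>?K. \<Sum>S\<in>Pow {..<n}. \<psi> x S) \<le> (\<Prod>x\<in>?K. exp (exp (- real (M (snd x)))))"
  proof (rule prod_mono)
    fix x assume x: "x \<in> ?K"
    have "(\<Sum>S\<in>Pow {..<n}. \<psi> x S) \<le> 1 + exp (- real (M (snd x)))"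
      unfolding \<psi>_def
      by (rule level_bound) (use p0 M1 r x in auto)
    also have "\<dots> \<le> exp (exp (- real (M (snd x))))" by (simp add: add.commute)
    finally show "0 \<le> (\<Sum>S\<in>Pow {..<n}. \<psi> x S) \<and> (\<Sum>S\<in>Pow {..<n}. \<psi> x S) \<le> exp (exp (- real (M (snd x))))"
      by (simp add: sum_nonneg psi0)
  qed
  also have "(\<Prod>x\<in>?K. exp (exp (- real (M (snd x))))) = exp (\<Sum>x\<in>?K. exp (- real (M (snd x))))"
    by (simp add: exp_sum)
  also have "(\<Sum>x\<in>?K. exp (- real (M (snd x)))) = real n * (\<Sum>k<N. exp (- real (M k)))"
  proof -
    have "(\<Sum>x\<in>?K. exp (- real (M (snd x)))) = (\<Sum>(i,k)\<in>?K. exp (- real (M k)))"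
      by (intro sum.cong) auto
    also have "\<dots> = (\<Sum>i<n. \<Sum>k<N. exp (- real (M k)))" by (rule sum.cartesian_product[symmetric])
    finally show ?thesis by simp
  qed
  also have "exp (real n * (\<Sum>k<N. exp (- real (M k)))) \<le> exp (real n * \<epsilon>)"
    using se by (simp add: mult_left_mono)
  finally have "(\<Sum>g\<in>?W. \<Prod>x\<in>?K. p (snd x) ^ card (g x)) \<le> exp (-2 * \<epsilon> * real n) * exp (real n * \<epsilon>)"
    by (simp add: mult_left_mono)
  also have "\<dots> = exp (- \<epsilon> * real n)" by (simp add: exp_add[symmetric] algebra_simps)
  finally show ?thesis .
qed



lemma level_mass:
  assumes mu: "prob_space \<mu>" and sb: "sets \<mu> = sets borel" and c: "c > 0"
    and ae: "AE x in \<mu>. \<bar>x\<bar> \<le> B"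
  shows "(\<Sum>k<N. (c / 2 ^ Suc k) * measure \<mu> (lev c k)) \<le> (\<integral>x. x\<^sup>2 \<partial>\<mu>)"
proof -
  interpret prob_space \<mu> by (rule mu)
  have sp: "space \<mu> = UNIV" using sets_eq_imp_space_eq[OF sb] by simp
  have meas: "(\<lambda>x::real. x\<^sup>2) \<in> borel_measurable \<mu>" unfolding measurable_cong_sets[OF sb refl] by simp
  have int: "integrable \<mu> (\<lambda>x::real. x\<^sup>2)"
  proof (rule integrable_const_bound[where B="B\<^sup>2"])
    show "AE x in \<mu>. norm (x\<^sup>2) \<le> B\<^sup>2"
      using ae
    proof eventually_elim
      fix x :: real assume "\<bar>x\<bar> \<le> B"
      then have "\<bar>x\<bar>^2 \<le> B^2" by (intro power_mono) auto
      then show "norm (x\<^sup>2) \<le> B\<^sup>2" by simp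
    qed
  qed (rule meas)
  have lsets: "lev c k \<in> sets \<mu>" for k using sb lev_borel by simp
  have intk: "integrable \<mu> (\<lambda>x. (c / 2 ^ Suc k) * indicator (lev c k) x)" for k
    using lsets by (intro integrable_mult_right integrable_real_indicator) (auto simp: sp emeasure_eq_measure)
  have "(\<Sum>k<N. (c / 2 ^ Suc k) * measure \<mu> (lev c k))
      = (\<Sum>k<N. \<integral>x. (c / 2 ^ Suc k) * indicator (lev c k) x \<partial>\<mu>)"
    by (simp add: sp)
  also have "\<dots> = (\<integral>x. (\<Sum>k<N. (c / 2 ^ Suc k) * indicator (lev c k) x) \<partial>\<mu>)"
    using Bochner_Integration.integral_sum[where I="{..<N}" and M=\<mu> and f="\<lambda>k x. (c / 2 ^ Suc k) * indicator (lev c k) x", OF intk] by simp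
  also have "\<dots> \<le> (\<integral>x. x\<^sup>2 \<partial>\<mu>)"
  proof (rule integral_mono)
    show "integrable \<mu> (\<lambda>x. \<Sum>k<N. (c / 2 ^ Suc k) * indicator (lev c k) x)"
      by (rule Bochner_Integration.integrable_sum) (rule intk)
    show "integrable \<mu> (\<lambda>x::real. x\<^sup>2)" by (rule int)
    fix x :: real
    show "(\<Sum>k<N. (c / 2 ^ Suc k) * indicator (lev c k) x) \<le> x\<^sup>2"
    proof (cases "\<exists>k\<in>{..<N}. x \<in> lev c k")
      case False
      then have "(\<Sum>k<N. (c / 2 ^ Suc k) * indicator (lev c k) x) = 0"
        by (intro sum.neutral) (auto simp: indicator_def)
      then show ?thesis by simp
    next
      case True
      then obtain k0 where k0: "k0 < N" "x \<in> lev c k0" by auto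
      have "(\<Sum>k<N. (c / 2 ^ Suc k) * indicator (lev c k) x) = (c / 2 ^ Suc k0) * indicator (lev c k0) x"
      proof (rule sum.mono_neutral_left[where S="{k0}", symmetric, simplified])
        show "k0 \<in> {..<N}" using k0 by simp
        show "\<forall>i\<in>{..<N} - {k0}. c / 2 ^ Suc i * indicator (lev c i) x = 0"
          using lev_disj[OF c _ k0(2)] by (auto simp: indicator_def)
      qed simp
      also have "\<dots> < x\<^sup>2" using k0 by (simp add: lev_def)
      finally show ?thesis by simp
    qed
  qed
  finally show ?thesis .
qed



lemma comp_meas:
  assumes sb: "sets \<mu> = sets borel" and e: "e \<in> I"
  shows "(\<lambda>A. A e) \<in> borel_measurable (PiM I (\<lambda>_. \<mu>))"
  using measurable_component_singleton[OF e, of "\<lambda>_. \<mu>"] unfolding measurable_cong_sets[OF refl sb] .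

lemma box_sets:
  assumes sb: "sets \<mu> = sets borel" and fin: "finite I" and ne: "I \<noteq> {}"
    and X: "\<And>e. e \<in> I \<Longrightarrow> X e \<in> sets \<mu>"
  shows "{A \<in> space (PiM I (\<lambda>_. \<mu>)). \<forall>e\<in>I. A e \<in> X e} \<in> sets (PiM I (\<lambda>_. \<mu>))"
proof -
  have "{A \<in> space (PiM I (\<lambda>_. \<mu>)). \<forall>e\<in>I. A e \<in> X e} = (\<Inter>e\<in>I. (\<lambda>A. A e) -` X e \<inter> space (PiM I (\<lambda>_. \<mu>)))"
    using ne by auto
  also have "\<dots> \<in> sets (PiM I (\<lambda>_. \<mu>))"
  proof (rule sets.finite_INT[OF fin ne])
    fix e assume "e \<in> I"
    then show "(\<lambda>A. A e) -` X e \<inter> space (PiM I (\<lambda>_. \<mu>)) \<in> sets (PiM I (\<lambda>_. \<mu>))"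
      using X by (intro measurable_sets[OF measurable_component_singleton]) auto
  qed
  finally show ?thesis .
qed

lemma good_meas:
  assumes sb: "sets \<mu> = sets borel"
  shows "{A \<in> space (PiM ({..<n}\<times>{..<n}) (\<lambda>_. \<mu>)). norm_2inf n (col_restrict S A) \<le> R}
         \<in> sets (PiM ({..<n}\<times>{..<n}) (\<lambda>_. \<mu>))"
proof -
  let ?P = "PiM ({..<n}\<times>{..<n}) (\<lambda>_. \<mu>)"
  define f where "f i A = sqrt (\<Sum>j<n. (col_restrict S A (i,j))\<^sup>2)" for i A
  have fm: "f i \<in> borel_measurable ?P" if i: "i < n" for i
  proof -
    have "(\<lambda>A. col_restrict S A (i,j)) \<in> borel_measurable ?P" if j: "j < n" for j
    proof (cases "j \<in> S")
      case True
      then have "(\<lambda>A. col_restrict S A (i,j)) = (\<lambda>A. A (i,j))" by (simp add: col_restrict_def)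
      then show ?thesis using comp_meas[OF sb, of "(i,j)" "{..<n}\<times>{..<n}"] i j by simp
    next
      case False
      then have "(\<lambda>A. col_restrict S A (i,j)) = (\<lambda>A. 0)" by (simp add: col_restrict_def)
      then show ?thesis by simp
    qed
    then have "(\<lambda>A. \<Sum>j<n. (col_restrict S A (i,j))\<^sup>2) \<in> borel_measurable ?P"
      by (intro borel_measurable_sum borel_measurable_power) auto
    then show ?thesis unfolding f_def by (rule measurable_compose) (rule borel_measurable_sqrt)
  qed
  have eq: "norm_2inf n (col_restrict S A) \<le> R \<longleftrightarrow> 0 \<le> R \<and> (\<forall>i\<in>{..<n}. f i A \<le> R)" for A
    unfolding norm_2inf_def f_def by (subst Max_le_iff) auto
  have "{A \<in> space ?P. norm_2inf n (col_restrict S A) \<le> R} = {A \<in> space ?P. 0 \<le> R \<and> (\<forall>i\<in>{..<n}. f i A \<le> R)}"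
    using eq by simp
  also have "\<dots> \<in> sets ?P"
    using fm by measurable
  finally show ?thesis .
qed



lemma ln2_half: "1/2 \<le> ln (2::real)"
proof -
  have "exp (1/2::real) ^ 2 = exp 1" by (simp add: exp_of_nat_mult[symmetric])
  also have "\<dots> \<le> 2 ^ 2" using exp_le by simp
  finally have "exp (1/2::real) \<le> 2" by (rule power2_le_imp_le) simp
  then have "ln (exp (1/2::real)) \<le> ln 2" by (subst ln_le_cancel_iff) auto
  then show ?thesis by simp
qed

theorem mainTheorem5:
  "\<exists>C::real. C > 0 \<and>
     (\<forall>(\<mu>::real measure) (n::nat) (\<epsilon>::real).
        prob_space \<mu> \<and> sets \<mu> = sets borel \<and>
        (\<integral>x. x \<partial>\<mu>) = 0 \<and> (\<integral>x. x\<^sup>2 \<partial>\<mu>) \<le> 1 \<and>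
        (AE x in \<mu>. \<bar>x\<bar> \<le> sqrt (real n) / 2) \<and>
        0 < \<epsilon> \<and> \<epsilon> \<le> 1/2
      \<longrightarrow>
        measure (PiM ({..<n} \<times> {..<n}) (\<lambda>_. \<mu>))
          {A \<in> space (PiM ({..<n} \<times> {..<n}) (\<lambda>_. \<mu>)).
             \<exists>J \<subseteq> {..<n}. real (card J) \<le> \<epsilon> * real n \<and>
               norm_2inf n (col_restrict ({..<n} - J) A)
                 \<le> C * sqrt (ln (1 / \<epsilon>)) * sqrt (real n)}
        \<ge> 1 - exp (- \<epsilon> * real n))"
proof (intro exI[of _ "sqrt 1000"] conjI allI impI)
  show "sqrt 1000 > (0::real)" by simp
  fix \<mu> :: "real measure" and n :: nat and \<epsilon> :: real
  assume H: "prob_space \<mu> \<and> sets \<mu> = sets borel \<and>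
        (\<integral>x. x \<partial>\<mu>) = 0 \<and> (\<integral>x. x\<^sup>2 \<partial>\<mu>) \<le> 1 \<and>
        (AE x in \<mu>. \<bar>x\<bar> \<le> sqrt (real n) / 2) \<and>
        0 < \<epsilon> \<and> \<epsilon> \<le> 1/2"
  then have mu: "prob_space \<mu>" and sb: "sets \<mu> = sets borel" and m2: "(\<integral>x. x\<^sup>2 \<partial>\<mu>) \<le> 1"
    and ae: "AE x in \<mu>. \<bar>x\<bar> \<le> sqrt (real n) / 2" and e0: "0 < \<epsilon>" and e1: "\<epsilon> \<le> 1/2"
    by auto
  let ?I = "{..<n} \<times> {..<n}"
  let ?P = "PiM ?I (\<lambda>_. \<mu>)"
  let ?R = "sqrt 1000 * sqrt (ln (1 / \<epsilon>)) * sqrt (real n)"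
  define Good where "Good = {A \<in> space ?P. \<exists>J \<subseteq> {..<n}. real (card J) \<le> \<epsilon> * real n \<and>
               norm_2inf n (col_restrict ({..<n} - J) A) \<le> ?R}"
  interpret P: finite_product_prob_space "\<lambda>_. \<mu>" ?I
  proof -
    interpret prob_space \<mu> by (rule mu)
    show "finite_product_prob_space (\<lambda>_. \<mu>) ?I"
      by unfold_locales auto
  qed
  have main: "1 - exp (- \<epsilon> * real n) \<le> measure ?P Good"
  proof (cases "n = 0")
    case True
    then show ?thesis by simp
  next
    case False
    then have n0: "0 < n" by simp
    define c where "c = real n / 4"
    have c0: "c > 0" using n0 by (simp add: c_def)
    define L where "L = ln (1 / \<epsilon>)"
    have L2: "1/2 \<le> L"
    proof -
      have "ln 2 \<le> ln (1 / \<epsilon>)" using e0 e1 by (subst ln_le_cancel_iff) (auto simp: field_simps)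
      then show ?thesis using ln2_half by (simp add: L_def)
    qed
    have eL: "exp (- L) = \<epsilon>" using e0 by (simp add: L_def ln_div exp_minus)
    define u where "u = 1000 * L - 1"
    have e4: "exp (4::real) \<le> 81"
    proof -
      have "exp (4::real) = exp 1 ^ 4" by (simp add: exp_of_nat_mult[symmetric])
      also have "\<dots> \<le> 3 ^ 4" using exp_le by (intro power_mono) auto
      finally show ?thesis by simp
    qed
    have u4e: "4 * exp 4 \<le> u" using e4 L2 by (simp add: u_def)
    have u4: "4 \<le> u" using L2 by (simp add: u_def)
    have uL: "L + 1 \<le> u / 2" using L2 by (simp add: u_def)
    define p where "p k = measure \<mu> (lev c k)" for k
    define q where "q k = c / 2 ^ Suc k * p k" for k
    have p0: "0 \<le> p k" for k by (simp add: p_def)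
    have q0: "0 \<le> q k" for k using c0 p0 by (simp add: q_def)
    have sq: "(\<Sum>k<n. q k) \<le> 1"
      using level_mass[OF mu sb c0 ae, of n] m2 by (simp add: q_def p_def)
    define w where "w k = (q k + (1/4) * (3/4)^k) / 2" for k
    have sw: "(\<Sum>k<n. w k) \<le> 1"
    proof -
      have g0: "(\<Sum>k<n. (3/4::real)^k) \<le> 4"
        by (simp add: sum_gp_strict)
      have g: "(\<Sum>k<n. (1/4) * (3/4::real)^k) \<le> 1"
      proof -
        have "(\<Sum>k<n. (1/4) * (3/4::real)^k) = (1/4) * (\<Sum>k<n. (3/4::real)^k)"
          by (rule sum_distrib_left[symmetric])
        then show ?thesis using g0 by linarith
      qed
      have "(\<Sum>k<n. w k) = (\<Sum>k<n. q k + (1/4) * (3/4::real)^k) / 2"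
        unfolding w_def by (rule sum_divide_distrib[symmetric])
      also have "\<dots> = ((\<Sum>k<n. q k) + (\<Sum>k<n. (1/4) * (3/4::real)^k)) / 2"
        by (simp only: sum.distrib)
      finally have "(\<Sum>k<n. w k) = ((\<Sum>k<n. q k) + (\<Sum>k<n. (1/4) * (3/4::real)^k)) / 2" .
      then show ?thesis using sq g by simp
    qed
    define m where "m k = 4 * w k * u * 2 ^ k" for k
    define M where "M k = nat \<lfloor>m k\<rfloor> + 1" for k
    have m0: "0 \<le> m k" for k using q0 u4 by (simp add: m_def w_def)
    have M1: "1 \<le> M k" for k by (simp add: M_def)
    have mM: "m k \<le> real (M k)" for k
      using m0[of k] by (simp add: M_def) linarith
    have Mm: "real (M k) - 1 \<le> m k" for k
      using m0[of k] by (simp add: M_def)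
    have key1: "(u/2) * (3/2)^k \<le> real (M k)" for k
    proof -
      have "(u/2) * (3/2)^k = 4 * ((1/8) * (3/4)^k) * u * 2^k"
        by (simp add: power_mult_distrib[symmetric])
      also have "\<dots> \<le> m k" unfolding m_def w_def using q0[of k] u4
        by (intro mult_right_mono) auto
      finally show ?thesis using mM[of k] by simp
    qed
    have key2: "exp 1 * (real n * (exp 2 * p k)) \<le> exp (-1) * real (M k)" for k
    proof -
      define Q where "Q = q k * 2 ^ k"
      have Q0: "0 \<le> Q" using q0 by (simp add: Q_def)
      have "real n * p k = 8 * Q"
        using c0 n0 by (simp add: Q_def q_def c_def field_simps)
      then have lhs: "exp 1 * (real n * (exp 2 * p k)) = 8 * exp 3 * Q"
      proof -
        have e3: "exp 1 * exp 2 = exp (3::real)" by (simp add: exp_add[symmetric])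
        have "exp 1 * (real n * (exp 2 * p k)) = (exp 1 * exp 2) * (real n * p k)" by (simp only: ac_simps)
        then show ?thesis using \<open>real n * p k = 8 * Q\<close> e3 by simp
      qed
      have "2 * u * Q \<le> m k"
        unfolding m_def Q_def w_def using u4 q0[of k]
        by (simp add: algebra_simps mult_left_mono)
      then have "exp (-1) * (2 * u * Q) \<le> exp (-1) * real (M k)"
        using mM[of k] by (intro mult_left_mono) auto
      moreover have "8 * exp 3 * Q \<le> exp (-1) * (2 * u * Q)"
      proof -
        have "8 * exp 3 * Q = exp (-1) * (2 * (4 * exp 4) * Q)"
          by (simp add: exp_add[symmetric] algebra_simps)
        also have "\<dots> \<le> exp (-1) * (2 * u * Q)"
          using u4e Q0 by (intro mult_left_mono mult_right_mono) auto
        finally show ?thesis .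
      qed
      ultimately show ?thesis using lhs by linarith
    qed
    have key3: "(\<Sum>k<n. exp (- real (M k))) \<le> \<epsilon>"
      using exp_sum_bound[OF u4 uL, of n M] key1 eL by simp
    have rowb: "(\<Sum>k<n. (real (M k) - 1) * (c / 2^k)) \<le> u * real n"
    proof -
      have "(\<Sum>k<n. (real (M k) - 1) * (c / 2^k)) \<le> (\<Sum>k<n. m k * (c / 2^k))"
        using Mm c0 by (intro sum_mono mult_right_mono) auto
      also have "\<dots> = (\<Sum>k<n. w k) * (u * real n)"
        by (simp add: m_def c_def sum_distrib_right)
      also have "\<dots> \<le> 1 * (u * real n)"
        using sw u4 by (intro mult_right_mono) auto
      finally show ?thesis by simp
    qed
    have cN: "c / 2 ^ n \<le> 1"
    proof -
      have "real n \<le> 2 ^ n" using less_exp[of n] by (metis less_imp_le of_nat_le_iff of_nat_numeral of_nat_power)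
      then have "real n / 4 \<le> 2 ^ n" by linarith
      then show ?thesis unfolding c_def by (simp add: divide_le_eq_1)
    qed
    define W where "W = {g \<in> PiE ({..<n}\<times>{..<n}) (\<lambda>_. Pow {..<n}).
            (\<forall>x\<in>{..<n}\<times>{..<n}. g x = {} \<or> M (snd x) \<le> card (g x)) \<and>
            \<epsilon> * real n < (\<Sum>x\<in>{..<n}\<times>{..<n}. real (card (g x)))}"
    define Box where "Box g = {A \<in> space ?P. \<forall>e\<in>?I. A e \<in> Xb n c g e}" for g
    define Bd where "Bd = {x::real. \<not> \<bar>x\<bar> \<le> sqrt (real n) / 2}"
    define Null where "Null = (\<Union>e\<in>?I. {A \<in> space ?P. A e \<in> Bd})"
    define U where "U = Null \<union> (\<Union>g\<in>W. Box g)"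
    have spmu: "space \<mu> = UNIV" using sets_eq_imp_space_eq[OF sb] by simp
    have Bd_borel: "Bd \<in> sets borel" unfolding Bd_def by measurable
    then have Bd_sets: "Bd \<in> sets \<mu>" using sb by simp
    have Bd0: "emeasure \<mu> Bd = 0"
      using AE_iff_measurable[OF Bd_sets, of "\<lambda>x. \<bar>x\<bar> \<le> sqrt (real n) / 2"] ae spmu
      by (simp add: Bd_def)
    have nsets: "{A \<in> space ?P. A e \<in> Bd} \<in> sets ?P" if e: "e \<in> ?I" for e
      using sets_Collect_single'[OF e, of "\<lambda>_. \<mu>" "\<lambda>x. x \<in> Bd"] Bd_sets spmu by simp
    have nmeas: "measure ?P {A \<in> space ?P. A e \<in> Bd} = 0" if e: "e \<in> ?I" for e
    proof -
      have "emeasure ?P {A \<in> space ?P. A e \<in> Bd} = 0"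
        using P.emeasure_PiM_Collect_single[OF e Bd_sets] Bd0 by simp
      then show ?thesis by (simp add: measure_def)
    qed
    have Null_sets: "Null \<in> sets ?P" unfolding Null_def by (intro sets.finite_UN nsets) auto
    have Null0: "measure ?P Null \<le> 0"
    proof -
      have "measure ?P Null \<le> (\<Sum>e\<in>?I. measure ?P {A \<in> space ?P. A e \<in> Bd})"
        unfolding Null_def by (intro measure_UNION_le nsets) auto
      also have "\<dots> = 0" using nmeas by simp
      finally show ?thesis .
    qed
    have finW: "finite W" unfolding W_def
      by (rule finite_subset[OF _ finite_PiE[of "{..<n}\<times>{..<n}" "\<lambda>_. Pow {..<n}"]]) auto
    have gsub: "g p \<subseteq> {..<n}" if "g \<in> W" "p \<in> {..<n}\<times>{..<n}" for g p
      using that by (auto simp: W_def PiE_iff)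
    have Box_sets: "Box g \<in> sets ?P" for g
      unfolding Box_def using n0 by (intro box_sets[OF sb] Xb_sets[OF sb]) auto
    have Box_meas: "measure ?P (Box g) \<le> (\<Prod>x\<in>{..<n}\<times>{..<n}. p (snd x) ^ card (g x))" if g: "g \<in> W" for g
      unfolding Box_def p_def using box_measure[OF mu sb c0, of n n g] gsub[OF g] by simp
    have U_sets: "U \<in> sets ?P" unfolding U_def using Null_sets Box_sets finW by auto
    have U_meas: "measure ?P U \<le> exp (- \<epsilon> * real n)"
    proof -
      have "measure ?P U \<le> measure ?P Null + measure ?P (\<Union>g\<in>W. Box g)"
        unfolding U_def using Null_sets Box_sets finW by (intro measure_Un_le) auto
      also have "measure ?P (\<Union>g\<in>W. Box g) \<le> (\<Sum>g\<in>W. measure ?P (Box g))"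
        using finW Box_sets by (intro measure_UNION_le) auto
      also have "\<dots> \<le> (\<Sum>g\<in>W. \<Prod>x\<in>{..<n}\<times>{..<n}. p (snd x) ^ card (g x))"
        by (intro sum_mono Box_meas)
      also have "\<dots> \<le> exp (- \<epsilon> * real n)"
        unfolding W_def by (rule witness_sum[OF p0 M1 key2 key3])
      finally show ?thesis using Null0 by linarith
    qed
    have incl: "space ?P - Good \<subseteq> U"
    proof
      fix A assume A: "A \<in> space ?P - Good"
      show "A \<in> U"
      proof (cases "\<exists>e\<in>?I. A e \<in> Bd")
        case True
        then show ?thesis using A by (auto simp: U_def Null_def)
      next
        case False
        have bnd: "\<forall>i<n. \<forall>j<n. (A (i,j))\<^sup>2 \<le> c"
        proof (intro allI impI)
          fix i j assume "i < n" "j < n"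
          then have "\<bar>A (i,j)\<bar> \<le> sqrt (real n) / 2" using False by (auto simp: Bd_def)
          then have "\<bar>A (i,j)\<bar>^2 \<le> (sqrt (real n) / 2)^2" by (intro power_mono) auto
          then show "(A (i,j))\<^sup>2 \<le> c" by (simp add: c_def power_divide)
        qed
        define G where "G = Gs n c M A"
        define J where "J = (\<Union>p\<in>{..<n}\<times>{..<n}. G p)"
        have Gsub: "G p \<subseteq> {..<n}" for p by (auto simp: G_def Gs_def split: prod.splits if_splits)
        have Jsub: "J \<subseteq> {..<n}" using Gsub by (auto simp: J_def)
        have cardJ: "real (card J) \<le> (\<Sum>x\<in>{..<n}\<times>{..<n}. real (card (G x)))"
        proof -
          have "card J \<le> (\<Sum>x\<in>{..<n}\<times>{..<n}. card (G x))" unfolding J_def by (rule card_UN_le) simp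
          then have "real (card J) \<le> real (\<Sum>x\<in>{..<n}\<times>{..<n}. card (G x))" by (rule of_nat_mono)
          then show ?thesis by simp
        qed
        have sumgt: "\<epsilon> * real n < (\<Sum>x\<in>{..<n}\<times>{..<n}. real (card (G x)))"
        proof (rule ccontr)
          assume "\<not> ?thesis"
          then have cJ: "real (card J) \<le> \<epsilon> * real n" using cardJ by linarith
          have rows: "(\<Sum>j<n. (col_restrict ({..<n} - J) A (i,j))\<^sup>2) \<le> 1000 * L * real n" if i: "i < n" for i
          proof -
            have "(\<Sum>j<n. (col_restrict ({..<n} - J) A (i,j))\<^sup>2) \<le> real n + (\<Sum>k<n. (real (M k) - 1) * (c / 2^k))"
              by (rule row_bound[OF bnd cN _ i M1]) (simp add: J_def G_def)
            also have "\<dots> \<le> real n + u * real n" using rowb by simp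
            also have "\<dots> = 1000 * L * real n" by (simp add: u_def algebra_simps)
            finally show ?thesis .
          qed
          have "norm_2inf n (col_restrict ({..<n} - J) A) \<le> sqrt (1000 * L * real n)"
            by (rule norm_2inf_le[OF rows]) (use L2 in auto)
          also have "sqrt (1000 * L * real n) = ?R" by (simp add: L_def real_sqrt_mult)
          finally have "A \<in> Good" using A Jsub cJ by (auto simp: Good_def)
          then show False using A by simp
        qed
        define g where "g = restrict G ({..<n}\<times>{..<n})"
        have gW: "g \<in> W"
        proof -
          have "g \<in> PiE ({..<n}\<times>{..<n}) (\<lambda>_. Pow {..<n})" using Gsub by (simp add: g_def)
          moreover have "\<forall>x\<in>{..<n}\<times>{..<n}. g x = {} \<or> M (snd x) \<le> card (g x)"
          proof
            fix x assume x: "x \<in> {..<n}\<times>{..<n}"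
            obtain i k where xe: "x = (i,k)" by fastforce
            show "g x = {} \<or> M (snd x) \<le> card (g x)"
              using x by (simp add: g_def G_def Gs_def xe cnt_def)
          qed
          moreover have "(\<Sum>x\<in>{..<n}\<times>{..<n}. real (card (g x))) = (\<Sum>x\<in>{..<n}\<times>{..<n}. real (card (G x)))"
            by (intro sum.cong) (auto simp: g_def)
          ultimately show ?thesis using sumgt by (simp add: W_def)
        qed
        have "A \<in> Box g"
        proof -
          have "A e \<in> Xb n c g e" if e: "e \<in> ?I" for e
          proof -
            obtain i j where ee: "e = (i,j)" by fastforce
            have "A (i,j) \<in> lev c k" if "k < n" "j \<in> g (i,k)" for k
              using that e ee by (auto simp: g_def G_def Gs_def split: if_splits)
            then show ?thesis by (auto simp: Xb_def ee)
          qed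
          then show ?thesis using A by (simp add: Box_def)
        qed
        then show ?thesis using gW by (auto simp: U_def)
      qed
    qed
    have Good_sets: "Good \<in> sets ?P"
    proof -
      have "Good = (\<Union>J\<in>{J. J \<subseteq> {..<n} \<and> real (card J) \<le> \<epsilon> * real n}.
                {A \<in> space ?P. norm_2inf n (col_restrict ({..<n} - J) A) \<le> ?R})"
        by (auto simp: Good_def)
      also have "\<dots> \<in> sets ?P"
        by (intro sets.finite_UN good_meas[OF sb]) (auto intro: finite_subset[of _ "Pow {..<n}"])
      finally show ?thesis .
    qed
    have "measure ?P (space ?P - Good) \<le> measure ?P U"
      using incl U_sets by (rule P.finite_measure_mono)
    moreover have "measure ?P (space ?P - Good) = 1 - measure ?P Good"
      using Good_sets by (rule P.prob_compl)
    ultimately show ?thesis using U_meas by linarith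
  qed
  then show "measure ?P {A \<in> space ?P. \<exists>J \<subseteq> {..<n}. real (card J) \<le> \<epsilon> * real n \<and>
               norm_2inf n (col_restrict ({..<n} - J) A) \<le> ?R} \<ge> 1 - exp (- \<epsilon> * real n)"
    by (simp add: Good_def)
qed

end
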